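(* Let $n\ge2$ and $0\le m\le\lfloor n/2\rfloor$. For $z^n\in\mathcal Z^n$ let $\hat{\mathbf S}(z^n)=(\hat s_1,\dots,\hat s_n)$ be any minimizer of $\tilde L_{\mathbf S}(z^n)$ over $\mathbf S\in\mathcal S^n_{0,m}$, and let the $(0,m)$-S-DUDE be the denoiser with output $\hat X_t(z^n)=\hat s_t(z_t)$, $1\le t\le n$. Then for all $\epsilon>0$ and all $x^n\in\mathcal X^n$, $$\Pr\Big(L_{\hat{\mathbf S}(Z^n)}(x^n,Z^n)-D_{0,m}(x^n,Z^n)>\epsilon\Big)\le 2\exp\left(-n\Big[\frac{\epsilon^2}{2L_{\max}^2}-2\Big\{h\Big(\frac mn\Big)+\frac{(m+1)\ln N}{n}\Big\}\Big]\right),$$ where $h(x)=-x\ln x-(1-x)\ln(1-x)$ and $N=|\mathcal S|$. In particular the right-hand side is exponentially small in $n$ provided $m=o(n)$.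
   Context: Let $\mathcal X,\mathcal Z,\hat{\mathcal X}$ be finite alphabets and $\Pi=\{\Pi(x,z)\}$ a $|\mathcal X|\times|\mathcal Z|$ stochastic matrix (discrete memoryless channel) of full row rank. For deterministic $x^n\in\mathcal X^n$, the channel output $Z^n$ has independent components with $\Pr(Z_t=z)=\Pi(x_t,z)$. Fix a loss $\Lambda:\mathcal X\times\hat{\mathcal X}\to[0,\infty)$, $\Lambda_{\max}=\max_{x,\hat x}\Lambda(x,\hat x)$. Let $\mathcal S$ be the set of all maps $s:\mathcal Z\to\hat{\mathcal X}$. Fix a real $|\mathcal Z|\times|\mathcal X|$ matrix $H$ with $\Pi H=I$; $h(z)\in\mathbb R^{\mathcal X}$ is the column vector equal to the $z$-th row of $H$. For $s\in\mathcal S$, $\rho(s)\in\mathbb R^{\mathcal X}$ has components $\rho_x(s)=\sum_z\Lambda(x,s(z))\Pi(x,z)$, and $\ell(z,s)=h(z)^T\rho(s)$. Let $\ell_{\max}=\max_{z,s}\ell(z,s)-\min_{z,s}\ell(z,s)$, $L_{\max}=\Lambda_{\max}+\ell_{\max}$. For $\mathbf S=(s_1,\dots,s_n)\in\mathcal S^n$: $L_{\mathbf S}(x^n,z^n)=\frac1n\sum_{t=1}^n\Lambda(x_t,s_t(z_t))$ and $\tilde L_{\mathbf S}(z^n)=\frac1n\sum_{t=1}^n\ell(z_t,s_t)$. Let $\mathcal S^n_{0,m}=\{\mathbf S\in\mathcal S^n:\sum_{t=2}^n\mathbf 1_{\{s_{t-1}\ne s_t\}}\le m\}$ and $D_{0,m}(x^n,z^n)=\min_{\mathbf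 S\in\mathcal S^n_{0,m}}L_{\mathbf S}(x^n,z^n)$. *)

theory Defs
  imports "HOL-Analysis.Analysis"
begin

(* Sequences x^n, z^n are lists of length n; position t (0-based) corresponds to time t+1.
   Channel Ch x z, loss Lam x xh, matrix H z x with Ch H = I. *)

definition rho :: "('x::finite \<Rightarrow> 'z::finite \<Rightarrow> real) \<Rightarrow> ('x \<Rightarrow> 'xh \<Rightarrow> real) \<Rightarrow> ('z \<Rightarrow> 'xh) \<Rightarrow> 'x \<Rightarrow> real"
  where "rho Ch Lam s x = (\<Sum>z\<in>UNIV. Lam x (s z) * Ch x z)"

definition ell :: "('x::finite \<Rightarrow> 'z::finite \<Rightarrow> real) \<Rightarrow> ('x \<Rightarrow> 'xh \<Rightarrow> real) \<Rightarrow> ('z \<Rightarrow> 'x \<Rightarrow> real)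
    \<Rightarrow> 'z \<Rightarrow> ('z \<Rightarrow> 'xh) \<Rightarrow> real"
  where "ell Ch Lam H z s = (\<Sum>x\<in>UNIV. H z x * rho Ch Lam s x)"

definition Lambda_max :: "('x::finite \<Rightarrow> 'xh::finite \<Rightarrow> real) \<Rightarrow> real"
  where "Lambda_max Lam = Max (range (\<lambda>(x, xh). Lam x xh))"

definition ell_max :: "('x::finite \<Rightarrow> 'z::finite \<Rightarrow> real) \<Rightarrow> ('x \<Rightarrow> 'xh::finite \<Rightarrow> real) \<Rightarrow> ('z \<Rightarrow> 'x \<Rightarrow> real) \<Rightarrow> real"
  where "ell_max Ch Lam H = Max (range (\<lambda>(z, s). ell Ch Lam H z s)) - Min (range (\<lambda>(z, s). ell Ch Lam H z s))"

definition L_max :: "('x::finite \<Rightarrow> 'z::finite \<Rightarrow> real) \<Rightarrow> ('x \<Rightarrow> 'xh::finite \<Rightarrow> real) \<Rightarrow> ('z \<Rightarrow> 'x \<Rightarrow> real) \<Rightarrow> real"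
  where "L_max Ch Lam H = Lambda_max Lam + ell_max Ch Lam H"

definition loss_S :: "('x \<Rightarrow> 'xh \<Rightarrow> real) \<Rightarrow> ('z \<Rightarrow> 'xh) list \<Rightarrow> 'x list \<Rightarrow> 'z list \<Rightarrow> real"
  where "loss_S Lam S xs zs = (1 / real (length xs)) * (\<Sum>t<length xs. Lam (xs ! t) ((S ! t) (zs ! t)))"

definition est_loss_S :: "('x::finite \<Rightarrow> 'z::finite \<Rightarrow> real) \<Rightarrow> ('x \<Rightarrow> 'xh \<Rightarrow> real) \<Rightarrow> ('z \<Rightarrow> 'x \<Rightarrow> real)
    \<Rightarrow> ('z \<Rightarrow> 'xh) list \<Rightarrow> 'z list \<Rightarrow> real"
  where "est_loss_S Ch Lam H S zs = (1 / real (length zs)) * (\<Sum>t<length zs. ell Ch Lam H (zs ! t) (S ! t))"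

definition switches :: "'a list \<Rightarrow> nat"
  where "switches S = card {t. 1 \<le> t \<and> t < length S \<and> S ! (t - 1) \<noteq> S ! t}"

definition S0m :: "nat \<Rightarrow> nat \<Rightarrow> ('z \<Rightarrow> 'xh) list set"
  where "S0m n m = {S. length S = n \<and> switches S \<le> m}"

definition D0m :: "('x \<Rightarrow> 'xh::finite \<Rightarrow> real) \<Rightarrow> nat \<Rightarrow> 'x list \<Rightarrow> 'z::finite list \<Rightarrow> real"
  where "D0m Lam m xs zs = Min ((\<lambda>S. loss_S Lam S xs zs) ` (S0m (length xs) m :: ('z \<Rightarrow> 'xh) list set))"

(* Probability, under the memoryless channel with deterministic input xs, that Z^n satisfies P *)
definition chan_prob :: "('x \<Rightarrow> 'z::finite \<Rightarrow> real) \<Rightarrow> 'x list \<Rightarrow> ('z list \<Rightarrow> bool) \<Rightarrow> real"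
  where "chan_prob Ch xs P =
     (\<Sum>zs\<in>{zs. length zs = length xs \<and> P zs}. \<Prod>t<length xs. Ch (xs ! t) (zs ! t))"

definition hb :: "real \<Rightarrow> real"
  where "hb x = - x * ln x - (1 - x) * ln (1 - x)"

end

theory Submission imports Defs "HOL-Probability.Probability" begin


lemma binom_entropy:
  fixes n m :: nat assumes n: "n \<ge> 1" and mn: "2*m \<le> n"
  shows "(\<Sum>k\<le>m. real (n choose k)) \<le> exp (real n * hb (real m / real n))"
proof (cases "m = 0")
  case True thus ?thesis by (simp add: hb_def)
next
  case False
  define p where "p = real m / real n"
  have p0: "p > 0" using False n by (simp add: p_def)
  have ph: "p \<le> 1 - p" using mn n by (simp add: p_def field_simps)
  have p1: "p < 1" using ph p0 by linarith
  have key: "p^m * (1-p)^(n-m) \<le> p^k * (1-p)^(n-k)" if "k \<le> m" for k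
  proof -
    have "p^m = p^k * p^(m-k)" using that by (simp flip: power_add)
    also have "p^(m-k) \<le> (1-p)^(m-k)" using ph p0 by (intro power_mono) auto
    hence "p^k * p^(m-k) * (1-p)^(n-m) \<le> p^k * (1-p)^(m-k) * (1-p)^(n-m)"
      using p0 p1 by (intro mult_right_mono mult_left_mono) auto
    also have "p^k * (1-p)^(m-k) * (1-p)^(n-m) = p^k * (1-p)^(n-k)"
      using that mn by (simp add: mult.assoc flip: power_add)
    finally show ?thesis by simp
  qed
  have "(\<Sum>k\<le>m. real (n choose k)) * (p^m * (1-p)^(n-m)) = (\<Sum>k\<le>m. real (n choose k) * (p^m * (1-p)^(n-m)))"
    by (simp add: sum_distrib_right)
  also have "\<dots> \<le> (\<Sum>k\<le>m. real (n choose k) * p^k * (1-p)^(n-k))"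
    using key by (intro sum_mono) (simp add: mult.assoc mult_left_mono)
  also have "\<dots> \<le> (\<Sum>k\<le>n. real (n choose k) * p^k * (1-p)^(n-k))"
    using mn p0 p1 by (intro sum_mono2) auto
  also have "\<dots> = (p + (1-p))^n" by (rule binomial_ring[symmetric])
  also have "\<dots> = 1" by simp
  finally have A: "(\<Sum>k\<le>m. real (n choose k)) * (p^m * (1-p)^(n-m)) \<le> 1" .
  have "p^m * (1-p)^(n-m) = exp (- (real n * hb p))"
  proof -
    have "p^m * (1-p)^(n-m) = exp (real m * ln p) * exp (real (n-m) * ln (1-p))"
      using p0 p1 by (simp add: exp_of_nat_mult)
    also have "\<dots> = exp (real m * ln p + real (n-m) * ln (1-p))" by (simp add: exp_add)
    also have "real m * ln p + real (n-m) * ln (1-p) = - (real n * hb p)"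
      using n mn by (simp add: hb_def p_def of_nat_diff field_simps)
    finally show ?thesis .
  qed
  with A have "(\<Sum>k\<le>m. real (n choose k)) * exp (- (real n * hb p)) \<le> 1" by simp
  hence "(\<Sum>k\<le>m. real (n choose k)) \<le> exp (real n * hb p)"
    by (simp add: exp_minus field_simps)
  thus ?thesis by (simp add: p_def)
qed

lemma card_S0m:
  "card (S0m n m :: ('a::finite \<Rightarrow> 'b::finite) list set)
     \<le> CARD('a \<Rightarrow> 'b)^(m+1) * (\<Sum>k\<le>m. n choose k)"
proof -
  define N where "N = CARD('a \<Rightarrow> 'b)"
  have N1: "N \<ge> 1" unfolding N_def by (simp add: Suc_le_eq)
  define sw :: "('a \<Rightarrow> 'b) list \<Rightarrow> nat set" where
    "sw S = {t. 1 \<le> t \<and> t < length S \<and> S ! (t - 1) \<noteq> S ! t}" for S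
  define TT where "TT = {T. T \<subseteq> {..<n} \<and> card T \<le> m}"
  define phi where "phi S = (sw S, restrict (\<lambda>i. S ! i) (insert 0 (sw S)))" for S
  define SIG :: "(nat set \<times> (nat \<Rightarrow> 'a \<Rightarrow> 'b)) set" where
    "SIG = Sigma TT (\<lambda>T. PiE (insert 0 T) (\<lambda>_. UNIV))"
  have finTT: "finite TT" unfolding TT_def
    by (rule finite_subset[of _ "Pow {..<n}"]) auto
  have finSIG: "finite SIG" unfolding SIG_def using finTT
    by (intro finite_SigmaI finite_PiE) (auto simp: TT_def intro: finite_subset)
  have inj: "inj_on phi (S0m n m)"
  proof (rule inj_onI)
    fix S S' assume S: "S \<in> S0m n m" and S': "S' \<in> S0m n m" and eq: "phi S = phi S'"
    have len: "length S = n" "length S' = n" using S S' by (auto simp: S0m_def)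
    have swe: "sw S = sw S'" using eq by (simp add: phi_def)
    have agree: "S ! i = S' ! i" if "i \<in> insert 0 (sw S)" for i
    proof -
      have "restrict (\<lambda>i. S ! i) (insert 0 (sw S)) i = restrict (\<lambda>i. S' ! i) (insert 0 (sw S)) i"
        using eq swe by (simp add: phi_def)
      thus ?thesis using that by simp
    qed
    have "\<forall>i. i < n \<longrightarrow> S ! i = S' ! i"
    proof (intro allI)
      fix i show "i < n \<longrightarrow> S ! i = S' ! i"
      proof (induction i)
        case 0 show ?case using agree by simp
      next
        case (Suc i)
        show ?case
        proof
          assume i: "Suc i < n"
          show "S ! Suc i = S' ! Suc i"
          proof (cases "Suc i \<in> sw S")
            case True thus ?thesis using agree by simp
          next
            case False
            hence "Suc i \<notin> sw S'" using swe by simp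
            with False have "S ! i = S ! Suc i" "S' ! i = S' ! Suc i"
              using i len by (auto simp: sw_def)
            thus ?thesis using Suc i by simp
          qed
        qed
      qed
    qed
    thus "S = S'" using len by (intro nth_equalityI) auto
  qed
  have sub: "phi ` S0m n m \<subseteq> SIG"
  proof
    fix y assume "y \<in> phi ` S0m n m"
    then obtain S where S: "S \<in> S0m n m" and y: "y = phi S" by auto
    have "sw S \<subseteq> {..<n}" using S by (auto simp: sw_def S0m_def)
    moreover have "card (sw S) \<le> m" using S by (auto simp: sw_def S0m_def switches_def)
    ultimately show "y \<in> SIG" unfolding y phi_def SIG_def TT_def by auto
  qed
  have "card (S0m n m :: ('a \<Rightarrow> 'b) list set) \<le> card SIG"
    using card_inj_on_le[OF inj sub finSIG] .
  also have "card SIG = (\<Sum>T\<in>TT. N ^ card (insert 0 T))"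
  proof -
    have fT: "finite T" if "T \<in> TT" for T using that by (auto simp: TT_def intro: finite_subset)
    have "card SIG = (\<Sum>T\<in>TT. card (PiE (insert 0 T) (\<lambda>_. UNIV :: ('a \<Rightarrow> 'b) set)))"
      unfolding SIG_def using finTT fT by (subst card_SigmaI) (auto intro!: finite_PiE)
    also have "\<dots> = (\<Sum>T\<in>TT. N ^ card (insert 0 T))"
      using fT by (intro sum.cong refl) (simp add: card_PiE N_def)
    finally show ?thesis .
  qed
  also have "\<dots> \<le> (\<Sum>T\<in>TT. N ^ (m+1))"
  proof (intro sum_mono power_increasing N1)
    fix T assume "T \<in> TT"
    hence "finite T" "card T \<le> m" by (auto simp: TT_def intro: finite_subset)
    thus "card (insert 0 T) \<le> m + 1" using card_insert_le_m1 by (simp add: card_insert_if)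
  qed
  also have "\<dots> = card TT * N^(m+1)" by simp
  also have "card TT \<le> (\<Sum>k\<le>m. n choose k)"
  proof -
    have "TT = (\<Union>k\<in>{..m}. {T. T \<subseteq> {..<n} \<and> card T = k})" by (auto simp: TT_def)
    hence "card TT \<le> (\<Sum>k\<le>m. card {T. T \<subseteq> {..<n} \<and> card T = k})"
      using card_UN_le[of "{..m}"] by simp
    also have "\<dots> = (\<Sum>k\<le>m. n choose k)" by (simp add: n_subsets)
    finally show ?thesis .
  qed
  hence "card TT * N^(m+1) \<le> (\<Sum>k\<le>m. n choose k) * N^(m+1)" by simp
  finally show ?thesis by (simp add: N_def mult.commute)
qed



context
  fixes Ch :: "'x::finite \<Rightarrow> 'z::finite \<Rightarrow> real" and xs :: "'x list"
  assumes nn: "\<And>x z. Ch x z \<ge> 0" and s1: "\<And>x. (\<Sum>z\<in>UNIV. Ch x z) = 1"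
begin

definition Pt :: "nat \<Rightarrow> 'z pmf" where "Pt t = embed_pmf (Ch (xs ! t))"
definition MM :: "(nat \<Rightarrow> 'z) pmf" where "MM = Pi_pmf {..<length xs} undefined Pt"

lemma pmf_Pt: "pmf (Pt t) z = Ch (xs ! t) z"
proof -
  have "(\<integral>\<^sup>+x. ennreal (Ch (xs ! t) x) \<partial>count_space UNIV) = 1"
    by (simp add: nn_integral_count_space_finite nn s1)
  thus ?thesis unfolding Pt_def by (subst pmf_embed_pmf) (auto simp: nn)
qed

lemma expect_comp:
  assumes "t < length xs"
  shows "measure_pmf.expectation MM (\<lambda>f. (phi (f t) :: real)) = (\<Sum>z\<in>UNIV. Ch (xs ! t) z * phi z)"
proof -
  have "measure_pmf.expectation MM (\<lambda>f. phi (f t)) = measure_pmf.expectation (map_pmf (\<lambda>f. f t) MM) phi"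
    by simp
  also have "map_pmf (\<lambda>f. f t) MM = Pt t" unfolding MM_def using assms by (simp add: Pi_pmf_component)
  also have "measure_pmf.expectation (Pt t) phi = (\<Sum>z\<in>UNIV. phi z * pmf (Pt t) z)"
    by (rule integral_measure_pmf_real) auto
  finally show ?thesis by (simp add: pmf_Pt mult.commute)
qed

lemma chan_eq:
  "chan_prob Ch xs Q = measure_pmf.prob MM {f. Q (map f [0..<length xs])}"
proof -
  define n where "n = length xs"
  define L where "L = {zs :: 'z list. length zs = n}"
  define g where "g zs = (\<lambda>i. if i < n then zs ! i else undefined)" for zs :: "'z list"
  define A where "A = {f. Q (map f [0..<n])}"
  have finL: "finite L" unfolding L_def using finite_lists_length_eq[of "UNIV :: 'z set" n] by simp
  have injg: "inj_on g L"
  proof (rule inj_onI)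
    fix u v assume "u \<in> L" "v \<in> L" "g u = g v"
    thus "u = v" by (intro nth_equalityI) (auto simp: L_def g_def fun_eq_iff split: if_splits)
  qed
  have mapg: "map (g zs) [0..<n] = zs" if "zs \<in> L" for zs
    using that by (intro nth_equalityI) (auto simp: L_def g_def)
  have supp: "set_pmf MM \<subseteq> g ` L"
  proof
    fix f assume "f \<in> set_pmf MM"
    hence f: "\<forall>x. x \<notin> {..<n} \<longrightarrow> f x = undefined"
      using set_Pi_pmf_subset[of "{..<n}" undefined Pt] unfolding MM_def n_def by auto
    have "f = g (map f [0..<n])" using f by (auto simp: g_def fun_eq_iff)
    moreover have "map f [0..<n] \<in> L" by (simp add: L_def)
    ultimately show "f \<in> g ` L" by blast
  qed
  have AF: "A \<inter> g ` L = g ` {zs \<in> L. Q zs}"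
    using mapg by (auto simp: A_def)
  have "measure_pmf.prob MM A = measure_pmf.prob MM (A \<inter> set_pmf MM)"
    by (simp add: measure_Int_set_pmf)
  also have "A \<inter> set_pmf MM = (A \<inter> g ` L) \<inter> set_pmf MM" using supp by auto
  also have "measure_pmf.prob MM \<dots> = measure_pmf.prob MM (A \<inter> g ` L)"
    by (simp add: measure_Int_set_pmf)
  also have "\<dots> = sum (pmf MM) (g ` {zs \<in> L. Q zs})"
    unfolding AF by (rule measure_measure_pmf_finite) (use finL in auto)
  also have "\<dots> = (\<Sum>zs\<in>{zs \<in> L. Q zs}. pmf MM (g zs))"
    by (subst sum.reindex) (auto intro: inj_on_subset[OF injg])
  also have "\<dots> = (\<Sum>zs\<in>{zs \<in> L. Q zs}. \<Prod>t<n. Ch (xs ! t) (zs ! t))"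
    unfolding MM_def n_def[symmetric]
    by (intro sum.cong refl) (auto simp: pmf_Pi g_def pmf_Pt)
  also have "\<dots> = chan_prob Ch xs Q" by (simp add: chan_prob_def L_def n_def)
  finally show ?thesis by (simp add: A_def n_def)
qed

lemma ell_mean:
  fixes Lam :: "'x \<Rightarrow> 'xh \<Rightarrow> real" and H :: "'z \<Rightarrow> 'x \<Rightarrow> real"
  assumes ri: "\<And>x x'. (\<Sum>z\<in>UNIV. Ch x z * H z x') = (if x = x' then 1 else 0)"
  shows "(\<Sum>z\<in>UNIV. Ch x z * ell Ch Lam H z s) = rho Ch Lam s x"
proof -
  have "(\<Sum>z\<in>UNIV. Ch x z * ell Ch Lam H z s) = (\<Sum>z\<in>UNIV. \<Sum>x'\<in>UNIV. Ch x z * H z x' * rho Ch Lam s x')"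
    by (simp add: ell_def sum_distrib_left mult.assoc)
  also have "\<dots> = (\<Sum>x'\<in>UNIV. (\<Sum>z\<in>UNIV. Ch x z * H z x') * rho Ch Lam s x')"
    by (subst sum.swap) (simp add: sum_distrib_right)
  also have "\<dots> = (\<Sum>x'\<in>UNIV. if x = x' then rho Ch Lam s x' else 0)"
    by (intro sum.cong refl) (simp add: ri)
  also have "\<dots> = rho Ch Lam s x" by simp
  finally show ?thesis .
qed

lemma hoeff_S:
  fixes Lam :: "'x \<Rightarrow> 'xh::finite \<Rightarrow> real" and H :: "'z \<Rightarrow> 'x \<Rightarrow> real"
    and S :: "('z \<Rightarrow> 'xh) list" and eps :: real
  assumes ri: "\<And>x x'. (\<Sum>z\<in>UNIV. Ch x z * H z x') = (if x = x' then 1 else 0)"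
    and lnn: "\<And>x xh. Lam x xh \<ge> 0"
    and lenS: "length S = length xs" and Lpos: "L_max Ch Lam H > 0" and eps: "eps \<ge> 0"
    and npos: "length xs > 0"
  shows "measure_pmf.prob MM {f. \<bar>\<Sum>t<length xs. Lam (xs!t) ((S!t) (f t)) - ell Ch Lam H (f t) (S!t)\<bar> \<ge> eps}
     \<le> 2 * exp (-2 * eps\<^sup>2 / (real (length xs) * (L_max Ch Lam H)\<^sup>2))"
proof -
  define n where "n = length xs"
  define lo where "lo = Min (range (\<lambda>(z, s). ell Ch Lam H z s))"
  define hi where "hi = Max (range (\<lambda>(z, s). ell Ch Lam H z s))"
  define a where "a = - hi"
  define b where "b = Lambda_max Lam - lo"
  have ba: "b - a = L_max Ch Lam H"
    unfolding a_def b_def L_max_def ell_max_def hi_def[symmetric] lo_def[symmetric] by simp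
  define Y where "Y t f = Lam (xs!t) ((S!t) (f t)) - ell Ch Lam H (f t) (S!t)" for t f
  have lamle: "Lam x xh \<le> Lambda_max Lam" for x xh
    unfolding Lambda_max_def by (rule Max_ge) auto
  have ell1: "ell Ch Lam H z s \<le> hi" for z s
    unfolding hi_def by (rule Max_ge) auto
  have ell2: "lo \<le> ell Ch Lam H z s" for z s
    unfolding lo_def by (rule Min_le) auto
  have Ybd: "Y t f \<in> {a..b}" for t f
    using lamle[of "xs!t" "(S!t) (f t)"] lnn[of "xs!t" "(S!t) (f t)"] ell1[of "f t" "S!t"] ell2[of "f t" "S!t"]
    by (simp add: Y_def a_def b_def)
  have EY: "measure_pmf.expectation MM (Y t) = 0" if "t < n" for t
  proof -
    have "measure_pmf.expectation MM (Y t) =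
      (\<Sum>z\<in>UNIV. Ch (xs ! t) z * (Lam (xs!t) ((S!t) z) - ell Ch Lam H z (S!t)))"
      unfolding Y_def using that n_def by (intro expect_comp) auto
    also have "\<dots> = rho Ch Lam (S!t) (xs!t) - (\<Sum>z\<in>UNIV. Ch (xs ! t) z * ell Ch Lam H z (S!t))"
      by (simp add: right_diff_distrib sum_subtractf rho_def mult.commute)
    also have "\<dots> = 0" using ell_mean[OF ri, of "xs!t" Lam "S!t"] by linarith
    finally show ?thesis .
  qed
  interpret H: Hoeffding_ineq "measure_pmf MM" "{..<n}" Y "\<lambda>_. a" "\<lambda>_. b" 0
  proof unfold_locales
    show "prob_space.indep_vars (measure_pmf MM) (\<lambda>_. borel) Y {..<n}"
      unfolding MM_def n_def Y_def
      by (intro prob_space.indep_vars_compose2[OF _ indep_vars_Pi_pmf[where p = Pt]])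
         (auto simp: measure_pmf.prob_space_axioms)
  next
    show "(0::real) \<equiv> \<Sum>i\<in>{..<n}. measure_pmf.expectation MM (Y i)"
      using EY by simp
  qed (use Ybd in auto)
  have "measure_pmf.prob MM {x \<in> space (measure_pmf MM). eps \<le> \<bar>(\<Sum>i\<in>{..<n}. Y i x) - 0\<bar>}
     \<le> 2 * exp (-2 * eps\<^sup>2 / (\<Sum>i\<in>{..<n}. ((\<lambda>_. b) i - (\<lambda>_. a) i)\<^sup>2))"
    by (rule H.Hoeffding_ineq_abs_ge) (use eps npos Lpos ba n_def in auto)
  thus ?thesis using ba by (simp add: Y_def n_def)
qed

end


theorem theorem2:
  fixes Ch :: "'x::finite \<Rightarrow> 'z::finite \<Rightarrow> real"
    and Lam :: "'x \<Rightarrow> 'xh::finite \<Rightarrow> real"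
    and H :: "'z \<Rightarrow> 'x \<Rightarrow> real"
    and Shat :: "'z list \<Rightarrow> ('z \<Rightarrow> 'xh) list"
    and n m :: nat and eps :: real and xs :: "'x list"
  assumes stoch_nonneg: "\<And>x z. Ch x z \<ge> 0"
    and stoch_sum: "\<And>x. (\<Sum>z\<in>UNIV. Ch x z) = 1"
    and full_rank: "rank ((\<chi> x z. Ch x z) :: real^'z^'x) = CARD('x)"
    and right_inv: "\<And>x x'. (\<Sum>z\<in>UNIV. Ch x z * H z x') = (if x = x' then 1 else 0)"
    and loss_nonneg: "\<And>x xh. Lam x xh \<ge> 0"
    and n_ge: "n \<ge> 2"
    and m_le: "m \<le> n div 2"
    and Shat_in: "\<And>zs. length zs = n \<Longrightarrow> Shat zs \<in> S0m n m"
    and Shat_min: "\<And>zs S. length zs = n \<Longrightarrow> S \<in> S0m n m \<Longrightarrow>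
                      est_loss_S Ch Lam H (Shat zs) zs \<le> est_loss_S Ch Lam H S zs"
    and eps_pos: "eps > 0"
    and xs_len: "length xs = n"
  shows "chan_prob Ch xs (\<lambda>zs. loss_S Lam (Shat zs) xs zs - D0m Lam m xs zs > eps)
    \<le> 2 * exp (- real n * (eps\<^sup>2 / (2 * (L_max Ch Lam H)\<^sup>2)
          - 2 * (hb (real m / real n) + (real m + 1) * ln (real CARD('z \<Rightarrow> 'xh)) / real n)))"
proof -
  define N where "N = CARD('z \<Rightarrow> 'xh)"
  define L where "L = L_max Ch Lam H"
  define ev where "ev zs = (loss_S Lam (Shat zs) xs zs - D0m Lam m xs zs > eps)" for zs
  define RHS where "RHS = 2 * exp (- real n * (eps\<^sup>2 / (2 * L\<^sup>2)
          - 2 * (hb (real m / real n) + (real m + 1) * ln (real N) / real n)))"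
  have npos: "n > 0" using n_ge by simp
  have SS_def: "(S0m n m :: ('z \<Rightarrow> 'xh) list set) = {S. length S = n \<and> switches S \<le> m}"
    by (simp add: S0m_def)
  have finS: "finite (S0m n m :: ('z \<Rightarrow> 'xh) list set)"
    by (rule finite_subset[OF _ finite_lists_length_eq[of "UNIV :: ('z \<Rightarrow> 'xh) set" n]])
       (auto simp: S0m_def)
  have neS: "replicate n undefined \<in> (S0m n m :: ('z \<Rightarrow> 'xh) list set)"
  proof -
    have "switches (replicate n (undefined :: 'z \<Rightarrow> 'xh)) = 0"
      unfolding switches_def by (subst card_eq_0_iff) auto
    thus ?thesis by (simp add: S0m_def)
  qed
  have Dmin: "\<exists>S\<in>(S0m n m :: ('z \<Rightarrow> 'xh) list set). D0m Lam m xs zs = loss_S Lam S xs zs" for zs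
  proof -
    have "D0m Lam m xs zs \<in> (\<lambda>S. loss_S Lam S xs zs) ` (S0m n m :: ('z \<Rightarrow> 'xh) list set)"
      unfolding D0m_def xs_len using finS neS by (intro Min_in) auto
    thus ?thesis by auto
  qed
  have lossnn: "loss_S Lam S xs zs \<ge> 0" for S zs
    unfolding loss_S_def by (intro mult_nonneg_nonneg sum_nonneg loss_nonneg) auto
  show ?thesis
  proof (cases "\<exists>zs. length zs = n \<and> ev zs")
    case False
    hence "{zs. length zs = length xs \<and> ev zs} = {}" using xs_len by auto
    hence "chan_prob Ch xs ev = 0" unfolding chan_prob_def by (simp only: sum.empty)
    thus ?thesis by (simp add: ev_def[abs_def] L_def N_def)
  next
    case True
    then obtain zs0 where zs0: "length zs0 = n" "ev zs0" by auto
    have Lpos: "L > 0"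
    proof -
      obtain S where "S \<in> (S0m n m :: ('z \<Rightarrow> 'xh) list set)" "D0m Lam m xs zs0 = loss_S Lam S xs zs0"
        using Dmin by blast
      hence lpos: "loss_S Lam (Shat zs0) xs zs0 > 0" using zs0(2) lossnn[of S zs0] eps_pos
        unfolding ev_def by linarith
      have Lampos: "Lambda_max Lam > 0"
      proof (rule ccontr)
        assume "\<not> Lambda_max Lam > 0"
        moreover have "Lam x xh \<le> Lambda_max Lam" for x xh
          unfolding Lambda_max_def by (rule Max_ge) auto
        ultimately have "Lam x xh = 0" for x xh
          using loss_nonneg[of x xh] by (meson antisym not_less order_trans)
        hence "loss_S Lam (Shat zs0) xs zs0 = 0" by (simp add: loss_S_def)
        with lpos show False by simp
      qed
      have "Min (range (\<lambda>(z, s). ell Ch Lam H z s)) \<le> Max (range (\<lambda>(z, s). ell Ch Lam H z s))"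
      proof -
        have "Min (range (\<lambda>(z, s). ell Ch Lam H z s)) \<le> ell Ch Lam H undefined undefined"
          by (rule Min_le) auto
        also have "\<dots> \<le> Max (range (\<lambda>(z, s). ell Ch Lam H z s))"
          by (rule Max_ge) auto
        finally show ?thesis .
      qed
      hence "ell_max Ch Lam H \<ge> 0" by (simp add: ell_max_def)
      thus ?thesis using Lampos by (simp add: L_def L_max_def)
    qed
    define Y where "Y S t f = Lam (xs!t) ((S!t) (f t)) - ell Ch Lam H (f t) (S!t)"
      for S :: "('z \<Rightarrow> 'xh) list" and t and f :: "nat \<Rightarrow> 'z"
    define B where "B S = {f. \<bar>\<Sum>t<n. Y S t f\<bar> \<ge> real n * eps / 2}" for S
    define E where "E = exp (- (real n * eps\<^sup>2 / (2 * L\<^sup>2)))"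
    have diff: "loss_S Lam S xs (map f [0..<n]) - est_loss_S Ch Lam H S (map f [0..<n])
        = (1 / real n) * (\<Sum>t<n. Y S t f)" for S f
      by (simp add: loss_S_def est_loss_S_def xs_len Y_def sum_subtractf right_diff_distrib)
    have incl: "{f. ev (map f [0..<n])} \<subseteq> (\<Union>S\<in>(S0m n m :: ('z \<Rightarrow> 'xh) list set). B S)"
    proof
      fix f assume "f \<in> {f. ev (map f [0..<n])}"
      hence evf: "ev (map f [0..<n])" by simp
      define zs where "zs = map f [0..<n]"
      have lz: "length zs = n" by (simp add: zs_def)
      obtain S where S: "S \<in> (S0m n m :: ('z \<Rightarrow> 'xh) list set)" "D0m Lam m xs zs = loss_S Lam S xs zs"
        using Dmin by blast
      have est: "est_loss_S Ch Lam H (Shat zs) zs \<le> est_loss_S Ch Lam H S zs"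
        using Shat_min[OF lz S(1)] .
      have gap: "loss_S Lam (Shat zs) xs zs - loss_S Lam S xs zs > eps"
        using evf S(2) unfolding ev_def zs_def by simp
      have d1: "loss_S Lam (Shat zs) xs zs - est_loss_S Ch Lam H (Shat zs) zs = (1 / real n) * (\<Sum>t<n. Y (Shat zs) t f)"
        unfolding zs_def by (rule diff)
      have d2: "loss_S Lam S xs zs - est_loss_S Ch Lam H S zs = (1 / real n) * (\<Sum>t<n. Y S t f)"
        unfolding zs_def by (rule diff)
      have "(1 / real n) * (\<Sum>t<n. Y (Shat zs) t f) > eps / 2 \<or> (1 / real n) * (\<Sum>t<n. Y S t f) < - (eps / 2)"
        using gap est d1 d2 by linarith
      hence "real n * eps / 2 \<le> \<bar>\<Sum>t<n. Y (Shat zs) t f\<bar> \<or> real n * eps / 2 \<le> \<bar>\<Sum>t<n. Y S t f\<bar>"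
        using npos by (auto simp: field_simps)
      hence "f \<in> B (Shat zs) \<or> f \<in> B S" by (simp add: B_def)
      thus "f \<in> (\<Union>S\<in>(S0m n m :: ('z \<Rightarrow> 'xh) list set). B S)"
        using S(1) Shat_in[OF lz] by blast
    qed
    have PB: "measure_pmf.prob (MM Ch xs) (B S) \<le> 2 * E" if "S \<in> (S0m n m :: ('z \<Rightarrow> 'xh) list set)" for S
    proof -
      have lenS: "length S = length xs" using that xs_len by (simp add: S0m_def)
      have "measure_pmf.prob (MM Ch xs) (B S)
         \<le> 2 * exp (-2 * (real n * eps / 2)\<^sup>2 / (real (length xs) * (L_max Ch Lam H)\<^sup>2))"
        unfolding B_def Y_def xs_len[symmetric]
        by (rule hoeff_S[OF stoch_nonneg stoch_sum right_inv loss_nonneg lenS])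
           (use Lpos eps_pos npos xs_len in \<open>auto simp: L_def\<close>)
      also have "-2 * (real n * eps / 2)\<^sup>2 / (real (length xs) * (L_max Ch Lam H)\<^sup>2) = - (real n * eps\<^sup>2 / (2 * L\<^sup>2))"
        using npos Lpos xs_len by (simp add: L_def field_simps power2_eq_square)
      finally show ?thesis by (simp add: E_def)
    qed
    have "chan_prob Ch xs ev = measure_pmf.prob (MM Ch xs) {f. ev (map f [0..<n])}"
      using chan_eq[where Ch=Ch and xs=xs and Q=ev] stoch_nonneg stoch_sum xs_len by simp
    also have "\<dots> \<le> measure_pmf.prob (MM Ch xs) (\<Union>S\<in>(S0m n m :: ('z \<Rightarrow> 'xh) list set). B S)"
      using incl by (intro measure_pmf.finite_measure_mono) auto
    also have "\<dots> \<le> (\<Sum>S\<in>(S0m n m :: ('z \<Rightarrow> 'xh) list set). measure_pmf.prob (MM Ch xs) (B S))"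
      using finS by (intro measure_pmf.finite_measure_subadditive_finite) auto
    also have "\<dots> \<le> (\<Sum>S\<in>(S0m n m :: ('z \<Rightarrow> 'xh) list set). 2 * E)"
      using PB by (intro sum_mono) auto
    also have "\<dots> = real (card (S0m n m :: ('z \<Rightarrow> 'xh) list set)) * (2 * E)" by simp
    also have "\<dots> \<le> RHS"
    proof -
      define K where "K = real N ^ (m+1) * exp (real n * hb (real m / real n))"
      have N1: "real N \<ge> 1" unfolding N_def by (simp add: Suc_le_eq)
      have sumC: "(\<Sum>k\<le>m. real (n choose k)) \<le> exp (real n * hb (real m / real n))"
        using binom_entropy[of n m] npos m_le by linarith
      have sum1: "(\<Sum>k\<le>m. real (n choose k)) \<ge> 1"
      proof -
        have "(\<Sum>k\<le>m. real (n choose k)) \<ge> (\<Sum>k\<in>{0}. real (n choose k))"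
          by (intro sum_mono2) auto
        thus ?thesis by simp
      qed
      have cardK: "real (card (S0m n m :: ('z \<Rightarrow> 'xh) list set)) \<le> K"
      proof -
        have "real (card (S0m n m :: ('z \<Rightarrow> 'xh) list set)) \<le> real (N^(m+1) * (\<Sum>k\<le>m. n choose k))"
          using card_S0m[of n m] unfolding N_def by (simp only: of_nat_le_iff)
        also have "\<dots> = real N^(m+1) * (\<Sum>k\<le>m. real (n choose k))" by simp
        also have "\<dots> \<le> K" unfolding K_def using sumC N1 by (intro mult_left_mono) auto
        finally show ?thesis .
      qed
      have K1: "K \<ge> 1"
      proof -
        have "real N ^ (m+1) \<ge> 1" using N1 by (rule one_le_power)
        moreover have "exp (real n * hb (real m / real n)) \<ge> 1" using sumC sum1 by linarith
        ultimately have "1 * 1 \<le> real N ^ (m+1) * exp (real n * hb (real m / real n))"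
          by (intro mult_mono) auto
        thus ?thesis unfolding K_def by simp
      qed
      have "K * 1 \<le> K * K" using K1 by (intro mult_left_mono) auto
      hence "K \<le> K\<^sup>2" by (simp add: power2_eq_square)
      have RHSeq: "RHS = 2 * E * K\<^sup>2"
      proof -
        define h where "h = hb (real m / real n)"
        define X where "X = - (real n * eps\<^sup>2 / (2 * L\<^sup>2))"
        define c where "c = ln (real N)"
        have ex: "- real n * (eps\<^sup>2 / (2 * L\<^sup>2) - 2 * (h + (real m + 1) * c / real n))
            = X + (real n * h + real n * h) + real (2*(m+1)) * c"
        proof -
          have e1: "real n * ((real m + 1) * c / real n) = (real m + 1) * c" using npos by simp
          have g: "- r * (A - 2 * (hh + q)) = - (r * A) + (r * hh + r * hh) + 2 * (r * q)" for r A hh q :: real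
            by (simp add: algebra_simps)
          have e2: "real (2*(m+1)) * c = 2 * ((real m + 1) * c)" by simp
          show ?thesis unfolding X_def g e1 e2 by simp
        qed
        have "RHS = 2 * exp (X + (real n * h + real n * h) + real (2*(m+1)) * c)"
          unfolding RHS_def h_def[symmetric] c_def[symmetric] ex ..
        also have "\<dots> = 2 * (exp X * (exp (real n * h) * exp (real n * h)) * exp c ^ (2*(m+1)))"
          by (simp only: exp_add exp_of_nat_mult)
        also have "exp c = real N" unfolding c_def using N1 by simp
        also have "exp X = E" unfolding X_def E_def ..
        also have "real N ^ (2*(m+1)) = (real N ^ (m+1)) ^ 2"
          by (simp only: power_mult mult.commute[of 2])
        also have "2 * (E * (exp (real n * h) * exp (real n * h)) * (real N ^ (m+1)) ^ 2) = 2 * E * K\<^sup>2"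
          unfolding K_def h_def[symmetric] by (simp only: power2_eq_square mult_ac)
        finally show ?thesis .
      qed
      have "E \<ge> 0" by (simp add: E_def)
      hence "real (card (S0m n m :: ('z \<Rightarrow> 'xh) list set)) * (2 * E) \<le> K\<^sup>2 * (2 * E)"
        using cardK \<open>K \<le> K\<^sup>2\<close> by (intro mult_right_mono) auto
      thus ?thesis unfolding RHSeq by (simp only: mult_ac)
    qed
    finally have "chan_prob Ch xs ev \<le> RHS" .
    thus ?thesis unfolding ev_def[abs_def] RHS_def L_def N_def .
  qed
qed

end
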